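(* Under the hypotheses of the preceding theorem (theorem:ConvergenceRatesSparsityFull), if moreover $1<p\le2$, then $\|c^\alpha-c^\ast\|=\mathcal{O}(\sqrt{\delta+\epsilon})$ as $\delta+\epsilon\to0$.
   Context: The hypotheses are: sparsity setting with $X,Y,Z$ Hilbert spaces, $B:X\times Y\to Z$ bilinear with $\|B(c,s)\|\le C\|c\|\|s\|$ and sequentially weak-weak continuous, $P:Y\to Y_n\subset Y$ linear bounded ($Y_n$ finite-dimensional), $s_{\mathrm{calib}}\in Y_n$, $\mathcal{R}_s:Y\to[0,\infty)$ proper convex weakly lower semi-continuous, $\{\varphi_i\}$ an orthonormal basis of $X$, $1\le w_i<\infty$, $\Phi_p(c)=\sum_iw_i|\langle c,\varphi_i\rangle|^p$, fixed $\gamma>0$, $\nu_1,\nu_2>0$, $\tilde{\mathcal{R}}(c,s)=\Phi_p(c)+\frac{\nu_2}{2}\|P(s)-s_{\mathrm{calib}}\|^2+\nu_1\mathcal{R}_s(s)$, $J^{u,s_m}_{\alpha,\beta,\mu}(c,s)=\frac12\|B(c,s)-u\|^2+\frac{\gamma}{2}\|s-s_m\|^2+\frac{\mu}{2}\|P(s)-s_{\mathrm{calib}}\|^2+\alpha\Phi_p(c)+\beta\mathcal{R}_s(s)$; $u^\ast=B(c^\ast,s^\ast)$ with $c^\ast\in\arg\min\{\Phi_p(c):B(c,s^\ast)=u^\ast\}$; $\|u^\ast-u_\delta\|\le\delta$, $\|s^\ast-s_{\mathrm{mod},\epsilon}\|\le\epsilon$; there exist $\kappa_1\in[0,1)$,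 $\kappa_2\ge0$, $0\le\kappa_3<\min\{1,\gamma/(2\alpha_{\max})\}$, $\xi^\ast\in\partial\tilde{\mathcal{R}}(c^\ast,s^\ast)$ with $\langle\xi^\ast,(c^\ast-c,s^\ast-s)\rangle\le\kappa_1D^{\xi^\ast}_{\tilde{\mathcal{R}}}((c,s),(c^\ast,s^\ast))+\kappa_2\|B(c,s)-B(c^\ast,s^\ast)\|+\kappa_3\|s-s^\ast\|^2$ for all $(c,s)$, where $D^{\xi}_{\mathcal{R}}(x,x^\ast)=\mathcal{R}(x)-\mathcal{R}(x^\ast)-\langle\xi,x-x^\ast\rangle$; $(c^\alpha,s^\alpha)$ minimizes $J^{u_\delta,s_{\mathrm{mod},\epsilon}}_{\alpha,\nu_1\alpha,\nu_2\alpha}$, $0<\alpha\le\alpha_{\max}$, and $m(\delta+\epsilon)\le\alpha\le M(\delta+\epsilon)$ for constants $0<m\le M$. *)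

theory Defs
  imports "HOL-Analysis.Analysis" "HOL-Library.Liminf_Limsup"
begin

definition weak_conv :: "(nat \<Rightarrow> 'a::real_inner) \<Rightarrow> 'a \<Rightarrow> bool" where
  "weak_conv xs x \<longleftrightarrow> (\<forall>v. (\<lambda>n. xs n \<bullet> v) \<longlonglongrightarrow> x \<bullet> v)"

definition seq_weak_weak_cont2 :: "('a::real_inner \<Rightarrow> 'b::real_inner \<Rightarrow> 'c::real_inner) \<Rightarrow> bool" where
  "seq_weak_weak_cont2 B \<longleftrightarrow>
     (\<forall>cs c ss s. weak_conv cs c \<longrightarrow> weak_conv ss s \<longrightarrow>
        weak_conv (\<lambda>n. B (cs n) (ss n)) (B c s))"

definition weakly_lsc :: "('a::real_inner \<Rightarrow> real) \<Rightarrow> bool" where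
  "weakly_lsc R \<longleftrightarrow> (\<forall>xs x. weak_conv xs x \<longrightarrow> ereal (R x) \<le> liminf (\<lambda>n. ereal (R (xs n))))"

definition orthonormal_basis :: "('i \<Rightarrow> 'a::real_inner) \<Rightarrow> bool" where
  "orthonormal_basis \<phi> \<longleftrightarrow>
     (\<forall>i j. \<phi> i \<bullet> \<phi> j = (if i = j then 1 else 0)) \<and> closure (span (range \<phi>)) = UNIV"

definition Phi_p :: "real \<Rightarrow> ('i \<Rightarrow> real) \<Rightarrow> ('i \<Rightarrow> 'a::real_inner) \<Rightarrow> 'a \<Rightarrow> ereal" where
  "Phi_p p w \<phi> c =
     (if (\<lambda>i. w i * \<bar>c \<bullet> \<phi> i\<bar> powr p) summable_on UNIV
      then ereal (\<Sum>\<^sub>\<infinity>i. w i * \<bar>c \<bullet> \<phi> i\<bar> powr p) else \<infinity>)"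

definition subgradient :: "('a::real_inner \<Rightarrow> ereal) \<Rightarrow> 'a \<Rightarrow> 'a \<Rightarrow> bool" where
  "subgradient R x0 \<xi> \<longleftrightarrow> \<bar>R x0\<bar> \<noteq> \<infinity> \<and> (\<forall>x. R x0 + ereal (\<xi> \<bullet> (x - x0)) \<le> R x)"

definition bregman :: "('a::real_inner \<Rightarrow> ereal) \<Rightarrow> 'a \<Rightarrow> 'a \<Rightarrow> 'a \<Rightarrow> ereal" where
  "bregman R \<xi> x x0 = R x - R x0 - ereal (\<xi> \<bullet> (x - x0))"

definition R_tilde ::
  "real \<Rightarrow> ('i \<Rightarrow> real) \<Rightarrow> ('i \<Rightarrow> 'x::real_inner) \<Rightarrow> real \<Rightarrow> real \<Rightarrow> ('y::real_inner \<Rightarrow> 'y)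
     \<Rightarrow> 'y \<Rightarrow> ('y \<Rightarrow> real) \<Rightarrow> 'x \<times> 'y \<Rightarrow> ereal" where
  "R_tilde p w \<phi> \<nu>1 \<nu>2 P s_calib R_s cs =
     Phi_p p w \<phi> (fst cs) + ereal (\<nu>2 / 2 * (norm (P (snd cs) - s_calib))\<^sup>2 + \<nu>1 * R_s (snd cs))"

definition J_fun ::
  "('x::real_inner \<Rightarrow> 'y::real_inner \<Rightarrow> 'z::real_inner) \<Rightarrow> real \<Rightarrow> ('y \<Rightarrow> 'y) \<Rightarrow> 'y
     \<Rightarrow> real \<Rightarrow> ('i \<Rightarrow> real) \<Rightarrow> ('i \<Rightarrow> 'x) \<Rightarrow> ('y \<Rightarrow> real)
     \<Rightarrow> 'z \<Rightarrow> 'y \<Rightarrow> real \<Rightarrow> real \<Rightarrow> real \<Rightarrow> 'x \<Rightarrow> 'y \<Rightarrow> ereal" where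
  "J_fun B \<gamma> P s_calib p w \<phi> R_s u s_m \<alpha> \<beta> \<mu> c s =
     ereal (1/2 * (norm (B c s - u))\<^sup>2 + \<gamma> / 2 * (norm (s - s_m))\<^sup>2
            + \<mu> / 2 * (norm (P s - s_calib))\<^sup>2)
     + ereal \<alpha> * Phi_p p w \<phi> c + ereal (\<beta> * R_s s)"

end

theory Submission
  imports Defs
begin



lemma gap_pos_same:
  fixes a b p R :: real
  assumes p: "1 < p" "p \<le> 2" and a: "0 < a" "a \<le> R" and b: "0 < b" "b \<le> R"
  shows "p*(p-1)*(R+1) powr (p-2) / 4 * (a-b)^2 \<le> a powr p + b powr p - 2 * ((a+b)/2) powr p"
proof -
  define m where "m = p*(p-1)*(R+1) powr (p-2)"
  define C where "C = {0<..<R+1}"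
  define g where "g = (\<lambda>t::real. t powr p - m/2 * t^2)"
  have cv: "convex_on C g"
  proof (rule f''_ge0_imp_convex[where f' = "\<lambda>t. p * t powr (p-1) - m * t"
        and f'' = "\<lambda>t. p*(p-1) * t powr (p-2) - m"])
    show "convex C" unfolding C_def by simp
    fix x assume x: "x \<in> C"
    hence xp: "x > 0" "x < R+1" by (auto simp: C_def)
    show "DERIV g x :> p * x powr (p-1) - m * x" unfolding g_def
      using xp by (auto intro!: derivative_eq_intros simp: power2_eq_square)
    show "DERIV (\<lambda>t. p * t powr (p-1) - m * t) x :> p*(p-1) * x powr (p-2) - m"
      using xp by (auto intro!: derivative_eq_intros simp: algebra_simps)
    have "(R+1) powr (p-2) \<le> x powr (p-2)"
      using xp p by (intro powr_mono2') auto
    then show "0 \<le> p*(p-1) * x powr (p-2) - m" unfolding m_def using p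
      by (simp add: mult_left_mono)
  qed
  have "a \<in> C" "b \<in> C" using a b by (auto simp: C_def)
  from convex_onD[OF cv, of "1/2" a b] this
  have "g ((1/2) *\<^sub>R a + (1 - 1/2) *\<^sub>R b) \<le> (1/2) * g a + (1 - 1/2) * g b" by simp
  moreover have "(1/2) *\<^sub>R a + (1 - 1/2) *\<^sub>R b = (a+b)/2" by simp
  ultimately have "g ((a+b)/2) \<le> (g a + g b)/2" by (simp add: add_divide_distrib)
  hence h: "((a+b)/2) powr p - m/2 * ((a+b)/2)^2 \<le> (a powr p - m/2*a^2 + (b powr p - m/2*b^2))/2"
    unfolding g_def by simp
  have id: "m/4*(a-b)^2 = m/2*a^2 + m/2*b^2 - 2*(m/2 * ((a+b)/2)^2)"
    by (simp add: power2_eq_square field_simps)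
  have "m/4*(a-b)^2 \<le> a powr p + b powr p - 2 * ((a+b)/2) powr p"
    unfolding id using h by (simp add: field_simps)
  thus ?thesis unfolding m_def by simp
qed

lemma gap_pos_opp:
  fixes a b p R :: real
  assumes p: "1 < p" "p \<le> 2" and a: "\<bar>a\<bar> \<le> R" and b: "\<bar>b\<bar> \<le> R" and ab: "a * b \<le> 0"
  shows "(1 - 2 powr (1-p)) * (R+1) powr (p-2) / 4 * (a-b)^2
     \<le> \<bar>a\<bar> powr p + \<bar>b\<bar> powr p - 2 * \<bar>(a+b)/2\<bar> powr p"
proof -
  define s where "s = max \<bar>a\<bar> \<bar>b\<bar>"
  have s0: "0 \<le> s" and sR: "s \<le> R" using a b by (auto simp: s_def)
  have "\<bar>a+b\<bar> \<le> s" using ab unfolding s_def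
    using mult_pos_pos[of a b] mult_neg_neg[of a b] by (smt (verit))
  hence "\<bar>(a+b)/2\<bar> \<le> s/2" by simp
  hence "\<bar>(a+b)/2\<bar> powr p \<le> (s/2) powr p" using p by (intro powr_mono2) auto
  also have "\<dots> = s powr p / 2 powr p" using s0 by (simp add: powr_divide)
  finally have h1: "\<bar>(a+b)/2\<bar> powr p \<le> s powr p / 2 powr p" .
  have h2: "s powr p \<le> \<bar>a\<bar> powr p + \<bar>b\<bar> powr p"
    unfolding s_def by (cases "\<bar>a\<bar> \<le> \<bar>b\<bar>") (auto simp: max_def)
  have h3: "2 * (s powr p / 2 powr p) = 2 powr (1-p) * s powr p"
    by (simp add: powr_diff)
  have gap: "s powr p * (1 - 2 powr (1-p)) \<le> \<bar>a\<bar> powr p + \<bar>b\<bar> powr p - 2 * \<bar>(a+b)/2\<bar> powr p"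
    using h1 h2 h3 by (simp add: algebra_simps)
  have c0: "0 \<le> 1 - 2 powr (1-p)"
  proof -
    have "2 powr (1-p) \<le> 2 powr 0" using p by (intro powr_mono) auto
    thus ?thesis by simp
  qed
  have sq: "(a-b)^2 \<le> 4 * s^2"
  proof -
    have "abs (a-b) \<le> 2 * s" unfolding s_def using a b by linarith
    hence "(abs (a-b))^2 \<le> (2 * s)^2" by (intro power_mono) auto
    thus ?thesis by (simp add: power_mult_distrib)
  qed
  have sp: "s^2 * (R+1) powr (p-2) \<le> s powr p"
  proof (cases "s = 0")
    case True thus ?thesis using p by simp
  next
    case False
    hence spos: "s > 0" using s0 by simp
    have "(R+1) powr (p-2) \<le> s powr (p-2)" using spos sR p by (intro powr_mono2') auto
    hence "s^2 * (R+1) powr (p-2) \<le> s^2 * s powr (p-2)" by (intro mult_left_mono) auto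
    also have "\<dots> = s powr 2 * s powr (p-2)" using spos by (simp add: powr_numeral)
    also have "\<dots> = s powr p" using powr_add[of s 2 "p-2"] spos by simp
    finally show ?thesis .
  qed
  have "(1 - 2 powr (1-p)) * (R+1) powr (p-2) / 4 * (a-b)^2
     \<le> (1 - 2 powr (1-p)) * (R+1) powr (p-2) / 4 * (4 * s^2)"
    using sq c0 by (intro mult_left_mono) auto
  also have "\<dots> = (1 - 2 powr (1-p)) * (s^2 * (R+1) powr (p-2))" by simp
  also have "\<dots> \<le> (1 - 2 powr (1-p)) * s powr p" using sp c0 by (intro mult_left_mono) auto
  finally show ?thesis using gap by (simp add: mult.commute)
qed

lemma gap_pos:
  fixes a b p R :: real
  assumes p: "1 < p" "p \<le> 2" and a: "\<bar>a\<bar> \<le> R" and b: "\<bar>b\<bar> \<le> R"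
  shows "min (1 - 2 powr (1-p)) (p*(p-1)) * (R+1) powr (p-2) / 4 * (a-b)^2
     \<le> \<bar>a\<bar> powr p + \<bar>b\<bar> powr p - 2 * \<bar>(a+b)/2\<bar> powr p"
proof -
  have R0: "R \<ge> 0" using a by simp
  have nn: "0 \<le> (R+1) powr (p-2) / 4 * (a-b)^2" by simp
  consider "a * b \<le> 0" | "a > 0" "b > 0" | "a < 0" "b < 0"
    by (meson not_le zero_less_mult_iff)
  thus ?thesis
  proof cases
    case 1
    have "min (1 - 2 powr (1-p)) (p*(p-1)) * (R+1) powr (p-2) / 4 * (a-b)^2
       \<le> (1 - 2 powr (1-p)) * (R+1) powr (p-2) / 4 * (a-b)^2"
      by (intro mult_right_mono divide_right_mono) auto
    also note gap_pos_opp[OF p a b 1]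
    finally show ?thesis .
  next
    case 2
    have "min (1 - 2 powr (1-p)) (p*(p-1)) * (R+1) powr (p-2) / 4 * (a-b)^2
       \<le> p*(p-1) * (R+1) powr (p-2) / 4 * (a-b)^2"
      by (intro mult_right_mono divide_right_mono) auto
    also have "\<dots> \<le> a powr p + b powr p - 2 * ((a+b)/2) powr p"
      using 2 a b by (intro gap_pos_same[OF p]) auto
    finally show ?thesis using 2 by simp
  next
    case 3
    have "min (1 - 2 powr (1-p)) (p*(p-1)) * (R+1) powr (p-2) / 4 * (a-b)^2
       \<le> p*(p-1) * (R+1) powr (p-2) / 4 * ((-a)-(-b))^2"
      proof -
      have "(-a)-(-b) = b - a" by simp
      thus ?thesis by (subst power2_commute) (simp, intro mult_right_mono divide_right_mono, auto)
    qed
    also have "\<dots> \<le> (-a) powr p + (-b) powr p - 2 * ((-a+-b)/2) powr p"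
      using 3 a b by (intro gap_pos_same[OF p]) auto
    also have "\<dots> = \<bar>a\<bar> powr p + \<bar>b\<bar> powr p - 2 * \<bar>(a+b)/2\<bar> powr p"
      using 3 by simp
    finally show ?thesis .
  qed
qed



lemma norm_add_sq: fixes a b :: "'a::real_inner"
  shows "(norm (a + b))^2 = (norm a)^2 + (norm b)^2 + 2 * (a \<bullet> b)"
  by (simp add: power2_norm_eq_inner inner_add_left inner_add_right inner_commute)

lemma proj_facts:
  fixes \<phi> :: "'i \<Rightarrow> 'a::real_inner" and v :: 'a
  assumes on: "\<forall>i j. \<phi> i \<bullet> \<phi> j = (if i = j then 1 else 0)" and F: "finite F"
  defines "pr \<equiv> (\<Sum>i\<in>F. (v \<bullet> \<phi> i) *\<^sub>R \<phi> i)"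
  shows "\<And>j. j \<in> F \<Longrightarrow> (v - pr) \<bullet> \<phi> j = 0"
    and "(norm v)^2 = (norm (v - pr))^2 + (\<Sum>i\<in>F. (v \<bullet> \<phi> i)^2)"
proof -
  have pj: "pr \<bullet> \<phi> j = (if j \<in> F then v \<bullet> \<phi> j else 0)" for j
    unfolding pr_def using F by (simp add: inner_sum_left on if_distrib cong: if_cong)
  show "(v - pr) \<bullet> \<phi> j = 0" if "j \<in> F" for j
    using pj[of j] that by (simp add: inner_diff_left)
  have pp: "pr \<bullet> pr = (\<Sum>i\<in>F. (v \<bullet> \<phi> i)^2)"
    by (subst (2) pr_def) (simp add: inner_sum_right pj power2_eq_square)
  have vp: "v \<bullet> pr = (\<Sum>i\<in>F. (v \<bullet> \<phi> i)^2)"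
    unfolding pr_def by (simp add: inner_sum_right power2_eq_square)
  show "(norm v)^2 = (norm (v - pr))^2 + (\<Sum>i\<in>F. (v \<bullet> \<phi> i)^2)"
    unfolding power2_norm_eq_inner using pp vp
    by (simp add: inner_diff_left inner_diff_right inner_commute)
qed

lemma parseval_le:
  fixes \<phi> :: "'i \<Rightarrow> 'a::real_inner" and v :: 'a
  assumes onb: "orthonormal_basis \<phi>"
  shows "(\<lambda>i. (v \<bullet> \<phi> i)^2) summable_on UNIV"
    and "(norm v)^2 \<le> (\<Sum>\<^sub>\<infinity>i. (v \<bullet> \<phi> i)^2)"
proof -
  have on: "\<forall>i j. \<phi> i \<bullet> \<phi> j = (if i = j then 1 else 0)" and cl: "closure (span (range \<phi>)) = UNIV"
    using onb unfolding orthonormal_basis_def by auto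
  have fin: "(\<Sum>i\<in>F. (v \<bullet> \<phi> i)^2) \<le> (norm v)^2" if "finite F" for F
    using proj_facts(2)[OF on that, of v] by simp
  show sm: "(\<lambda>i. (v \<bullet> \<phi> i)^2) summable_on UNIV"
    by (rule nonneg_bdd_above_summable_on) (auto intro!: bdd_aboveI[where M="(norm v)^2"] fin)
  define S where "S = (\<Sum>\<^sub>\<infinity>i. (v \<bullet> \<phi> i)^2)"
  have key: "(norm v)^2 \<le> S + e^2" if e: "e > 0" for e
  proof -
    have "v \<in> closure (span (range \<phi>))" using cl by simp
    then obtain u where u: "u \<in> span (range \<phi>)" and d: "dist u v < e"
      using e unfolding closure_approachable by blast
    then obtain t r where t: "finite t" "t \<subseteq> range \<phi>" and ueq: "u = (\<Sum>a\<in>t. r a *\<^sub>R a)"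
      unfolding span_explicit by blast
    obtain F where F: "finite F" "t = \<phi> ` F"
      using finite_subset_image[OF t(1) t(2)] by blast
    define pr where "pr = (\<Sum>i\<in>F. (v \<bullet> \<phi> i) *\<^sub>R \<phi> i)"
    have orth: "(v - pr) \<bullet> \<phi> j = 0" if "j \<in> F" for j
      using proj_facts(1)[OF on F(1), of j v] that unfolding pr_def by simp
    have o1: "(v - pr) \<bullet> u = 0"
      unfolding ueq using F orth by (auto simp: inner_sum_right intro!: sum.neutral)
    have "(v - pr) \<bullet> (\<Sum>i\<in>F. (v \<bullet> \<phi> i) *\<^sub>R \<phi> i) = 0"
      using orth by (auto simp: inner_sum_right intro!: sum.neutral)
    hence o2: "(v - pr) \<bullet> pr = 0" by (simp add: pr_def)
    have "(norm (v - u))^2 = (norm (v - pr))^2 + (norm (pr - u))^2"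
    proof -
      have "v - u = (v - pr) + (pr - u)" by simp
      hence "(norm (v - u))^2 = (norm ((v - pr) + (pr - u)))^2" by simp
      also have "\<dots> = (norm (v - pr))^2 + (norm (pr - u))^2 + 2 * ((v - pr) \<bullet> (pr - u))"
        by (rule norm_add_sq)
      also have "(v - pr) \<bullet> (pr - u) = 0" using o1 o2 by (simp add: inner_diff_right)
      finally show ?thesis by simp
    qed
    hence "(norm (v - pr))^2 \<le> (norm (v - u))^2" by simp
    also have "\<dots> \<le> e^2" using d by (intro power_mono) (auto simp: dist_norm norm_minus_commute)
    finally have a: "(norm (v - pr))^2 \<le> e^2" .
    have b: "(\<Sum>i\<in>F. (v \<bullet> \<phi> i)^2) \<le> S"
      unfolding S_def by (rule finite_sum_le_infsum[OF sm F(1)]) auto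
    show ?thesis using proj_facts(2)[OF on F(1), of v] a b unfolding pr_def by linarith
  qed
  show "(norm v)^2 \<le> S"
  proof (rule field_le_epsilon)
    fix d :: real assume "d > 0"
    thus "(norm v)^2 \<le> S + d" using key[of "sqrt d"] by simp
  qed
qed


lemma summable_on_comparison_real:
  fixes f g :: "'i \<Rightarrow> real"
  assumes "g summable_on UNIV" "\<And>i. 0 \<le> f i" "\<And>i. f i \<le> g i"
  shows "f summable_on UNIV"
proof (rule nonneg_bdd_above_summable_on)
  show "bdd_above (sum f ` {F. F \<subseteq> UNIV \<and> finite F})"
  proof (rule bdd_aboveI[where M="infsum g UNIV"])
    fix x assume "x \<in> sum f ` {F. F \<subseteq> UNIV \<and> finite F}"
    then obtain F where F: "finite F" "x = sum f F" by auto
    have "sum f F \<le> sum g F" using assms by (intro sum_mono) auto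
    also have "\<dots> \<le> infsum g UNIV"
      using assms F by (intro finite_sum_le_infsum) (auto intro: order_trans)
    finally show "x \<le> infsum g UNIV" using F by simp
  qed
qed (use assms in auto)

lemma Phi_nonneg:
  assumes "\<forall>i. 1 \<le> w i"
  shows "0 \<le> Phi_p p w \<phi> c"
proof -
  have "0 \<le> (\<Sum>\<^sub>\<infinity>i. w i * \<bar>c \<bullet> \<phi> i\<bar> powr p)"
    using assms by (intro infsum_nonneg) (metis mult_nonneg_nonneg order_trans zero_le_one powr_ge_zero)
  thus ?thesis unfolding Phi_p_def by auto
qed

lemma Phi_finite:
  assumes "Phi_p p w \<phi> c \<noteq> \<infinity>"
  shows "(\<lambda>i. w i * \<bar>c \<bullet> \<phi> i\<bar> powr p) summable_on UNIV"
    and "Phi_p p w \<phi> c = ereal (\<Sum>\<^sub>\<infinity>i. w i * \<bar>c \<bullet> \<phi> i\<bar> powr p)"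
  using assms unfolding Phi_p_def by (auto split: if_splits)

lemma Phi_term_le:
  assumes "(\<lambda>i. w i * \<bar>c \<bullet> \<phi> i\<bar> powr p) summable_on UNIV" "\<forall>i. 1 \<le> w i"
  shows "\<bar>c \<bullet> \<phi> j\<bar> powr p \<le> (\<Sum>\<^sub>\<infinity>i. w i * \<bar>c \<bullet> \<phi> i\<bar> powr p)"
proof -
  have w0: "0 \<le> w i" for i using assms(2) by (auto intro: order_trans[OF zero_le_one])
  have "\<bar>c \<bullet> \<phi> j\<bar> powr p = 1 * \<bar>c \<bullet> \<phi> j\<bar> powr p" by simp
  also have "\<dots> \<le> w j * \<bar>c \<bullet> \<phi> j\<bar> powr p" using assms(2) by (intro mult_right_mono) auto
  also have "\<dots> = (\<Sum>i\<in>{j}. w i * \<bar>c \<bullet> \<phi> i\<bar> powr p)" by simp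
  also have "\<dots> \<le> (\<Sum>\<^sub>\<infinity>i. w i * \<bar>c \<bullet> \<phi> i\<bar> powr p)"
    using assms(1) w0 by (intro finite_sum_le_infsum) auto
  finally show ?thesis .
qed

lemma abs_le_powr:
  fixes x p :: real assumes "1 \<le> p"
  shows "\<bar>x\<bar> \<le> max 1 (\<bar>x\<bar> powr p)"
proof (cases "\<bar>x\<bar> \<le> 1")
  case False
  hence "\<bar>x\<bar> powr 1 \<le> \<bar>x\<bar> powr p" using assms by (intro powr_mono) auto
  thus ?thesis using False by simp
qed simp



theorem mainTheorem13:
  fixes B :: "'x::{real_inner,complete_space} \<Rightarrow> 'y::{real_inner,complete_space} \<Rightarrow> 'z::{real_inner,complete_space}"
    and C :: real
    and P :: "'y \<Rightarrow> 'y" and Yn :: "'y set" and s_calib :: 'y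
    and R_s :: "'y \<Rightarrow> real"
    and \<phi> :: "'i \<Rightarrow> 'x" and w :: "'i \<Rightarrow> real" and p :: real
    and \<gamma> \<nu>1 \<nu>2 :: real
    and c_star :: 'x and s_star :: 'y and u_star :: 'z
    and \<kappa>1 \<kappa>2 \<kappa>3 \<alpha>_max m M :: real
    and \<xi>_star :: "'x \<times> 'y"
  assumes B_bilinear: "bilinear B"
    and B_bound: "\<forall>c s. norm (B c s) \<le> C * norm c * norm s"
    and B_weak: "seq_weak_weak_cont2 B"
    and P_lin: "bounded_linear P"
    and Yn_fin: "subspace Yn" "\<exists>S. finite S \<and> span S = Yn"
    and P_range: "\<forall>y. P y \<in> Yn"
    and s_calib_in: "s_calib \<in> Yn"
    and R_s_nonneg: "\<forall>y. R_s y \<ge> 0"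
    and R_s_convex: "convex_on UNIV R_s"
    and R_s_wlsc: "weakly_lsc R_s"
    and \<phi>_onb: "orthonormal_basis \<phi>"
    and w_bounds: "\<forall>i. 1 \<le> w i"
    and p_bounds: "1 < p" "p \<le> 2"
    and \<gamma>_pos: "\<gamma> > 0"
    and \<nu>_pos: "\<nu>1 > 0" "\<nu>2 > 0"
    and u_star_def: "u_star = B c_star s_star"
    and c_star_min: "\<forall>c. B c s_star = u_star \<longrightarrow> Phi_p p w \<phi> c_star \<le> Phi_p p w \<phi> c"
    and \<alpha>_max_pos: "\<alpha>_max > 0"
    and \<kappa>_bounds: "0 \<le> \<kappa>1" "\<kappa>1 < 1" "0 \<le> \<kappa>2" "0 \<le> \<kappa>3" "\<kappa>3 < min 1 (\<gamma> / (2 * \<alpha>_max))"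
    and \<xi>_subgrad: "subgradient (R_tilde p w \<phi> \<nu>1 \<nu>2 P s_calib R_s) (c_star, s_star) \<xi>_star"
    and source_cond: "\<forall>c s. ereal (\<xi>_star \<bullet> ((c_star, s_star) - (c, s)))
        \<le> ereal \<kappa>1 * bregman (R_tilde p w \<phi> \<nu>1 \<nu>2 P s_calib R_s) \<xi>_star (c, s) (c_star, s_star)
           + ereal (\<kappa>2 * norm (B c s - B c_star s_star) + \<kappa>3 * (norm (s - s_star))\<^sup>2)"
    and mM: "0 < m" "m \<le> M"
  shows "\<exists>K \<delta>0. \<delta>0 > 0 \<and>
     (\<forall>\<delta> \<epsilon> u_\<delta> s_mod \<alpha> c_\<alpha> s_\<alpha>.
        \<delta> + \<epsilon> < \<delta>0 \<longrightarrow>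
        norm (u_star - u_\<delta>) \<le> \<delta> \<longrightarrow>
        norm (s_star - s_mod) \<le> \<epsilon> \<longrightarrow>
        0 < \<alpha> \<longrightarrow> \<alpha> \<le> \<alpha>_max \<longrightarrow>
        m * (\<delta> + \<epsilon>) \<le> \<alpha> \<longrightarrow> \<alpha> \<le> M * (\<delta> + \<epsilon>) \<longrightarrow>
        (\<forall>c s. J_fun B \<gamma> P s_calib p w \<phi> R_s u_\<delta> s_mod \<alpha> (\<nu>1 * \<alpha>) (\<nu>2 * \<alpha>) c_\<alpha> s_\<alpha>
               \<le> J_fun B \<gamma> P s_calib p w \<phi> R_s u_\<delta> s_mod \<alpha> (\<nu>1 * \<alpha>) (\<nu>2 * \<alpha>) c s) \<longrightarrow>
        norm (c_\<alpha> - c_star) \<le> K * sqrt (\<delta> + \<epsilon>))"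
proof -
  define Rt where "Rt = R_tilde p w \<phi> \<nu>1 \<nu>2 P s_calib R_s"
  define G where "G = (\<lambda>s. \<nu>2/2 * (norm (P s - s_calib))^2 + \<nu>1 * R_s s)"
  define Ph where "Ph = Phi_p p w \<phi>"
  have Rt_eq: "Rt (c,s) = Ph c + ereal (G s)" for c s
    unfolding Rt_def R_tilde_def G_def Ph_def by simp
  have G0: "G s \<ge> 0" for s using R_s_nonneg \<nu>_pos unfolding G_def by simp
  have Ph0: "Ph c \<ge> 0" for c using Phi_nonneg[OF w_bounds] unfolding Ph_def by blast
  have w0: "0 \<le> w i" for i using w_bounds by (auto intro: order_trans[OF zero_le_one])
  obtain \<xi>c \<xi>s where xi: "\<xi>_star = (\<xi>c, \<xi>s)" by (cases \<xi>_star)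
  from \<xi>_subgrad have fin: "\<bar>Rt (c_star,s_star)\<bar> \<noteq> \<infinity>"
    and sg: "\<And>x. Rt (c_star,s_star) + ereal (\<xi>_star \<bullet> (x - (c_star,s_star))) \<le> Rt x"
    unfolding subgradient_def Rt_def by auto
  have "Ph c_star \<noteq> \<infinity>" using fin unfolding Rt_eq by auto
  hence sum_s: "(\<lambda>i. w i * \<bar>c_star \<bullet> \<phi> i\<bar> powr p) summable_on UNIV"
    and Phs0: "Ph c_star = ereal (\<Sum>\<^sub>\<infinity>i. w i * \<bar>c_star \<bullet> \<phi> i\<bar> powr p)"
    using Phi_finite unfolding Ph_def by auto
  define Ps where "Ps = (\<Sum>\<^sub>\<infinity>i. w i * \<bar>c_star \<bullet> \<phi> i\<bar> powr p)"
  have Phs: "Ph c_star = ereal Ps" using Phs0 Ps_def by simp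
  define Gs where "Gs = G s_star"
  have Ps0: "Ps \<ge> 0" using Ph0[of c_star] Phs by simp
  have Gs0: "Gs \<ge> 0" using G0 Gs_def by simp
  have SG1: "\<xi>s \<bullet> (s - s_star) \<le> G s - Gs" for s
    using sg[of "(c_star, s)"] unfolding Rt_eq Phs xi Gs_def by simp
  have SG2: "ereal (Ps + \<xi>c \<bullet> (c - c_star)) \<le> Ph c" for c
  proof (cases "Ph c")
    case (real x)
    thus ?thesis using sg[of "(c, s_star)"] unfolding Rt_eq Phs xi by simp
  next
    case PInf thus ?thesis by simp
  next
    case MInf thus ?thesis using Ph0[of c] by simp
  qed
  define c3 where "c3 = \<alpha>_max * \<kappa>3"
  define A where "A = \<gamma>/2 - c3"
  have c30: "c3 \<ge> 0" using \<kappa>_bounds \<alpha>_max_pos unfolding c3_def by simp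
  have A0: "A > 0"
  proof -
    have "\<kappa>3 < \<gamma> / (2 * \<alpha>_max)" using \<kappa>_bounds(5) by simp
    hence "\<kappa>3 * (2 * \<alpha>_max) < \<gamma>" using \<alpha>_max_pos by (simp add: pos_less_divide_eq)
    thus ?thesis unfolding A_def c3_def by (simp add: algebra_simps)
  qed
  define K0 where "K0 = 1/2 + \<gamma>/2 + M*\<kappa>2 + M^2*\<kappa>2^2/2 + (c3 + c3^2/A)"
  define K1 where "K1 = K0 / (m * (1 - \<kappa>1))"
  define Pb where "Pb = (1+\<gamma>)/(2*m) + Ps + Gs"
  define R where "R = max (max 1 Pb) (max 1 Ps)"
  define k where "k = min (1 - 2 powr (1-p)) (p*(p-1)) * (R+1) powr (p-2) / 4"
  have k0: "k > 0"
  proof -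
    have "2 powr (1-p) < 2 powr 0" using p_bounds by (intro powr_less_mono) auto
    hence "1 - 2 powr (1-p) > 0" by simp
    moreover have "p*(p-1) > 0" using p_bounds by simp
    moreover have "(R+1) powr (p-2) > 0" unfolding R_def by simp
    ultimately show ?thesis unfolding k_def by simp
  qed
  have K00: "K0 \<ge> 0" unfolding K0_def using \<gamma>_pos mM \<kappa>_bounds A0 c30 by simp
  have K10: "K1 \<ge> 0" unfolding K1_def using K00 mM \<kappa>_bounds by simp
  show ?thesis
  proof (rule exI[of _ "sqrt (K1/k)"], rule exI[of _ "1::real"], intro conjI allI impI)
    show "(0::real) < 1" by simp
    fix \<delta> \<epsilon> :: real and u_\<delta> s_mod \<alpha> c_\<alpha> s_\<alpha>
    assume \<eta>1: "\<delta> + \<epsilon> < 1"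
      and nu: "norm (u_star - u_\<delta>) \<le> \<delta>"
      and ne: "norm (s_star - s_mod) \<le> \<epsilon>"
      and \<alpha>0: "0 < \<alpha>" and \<alpha>max: "\<alpha> \<le> \<alpha>_max"
      and \<alpha>lo: "m * (\<delta> + \<epsilon>) \<le> \<alpha>" and \<alpha>hi: "\<alpha> \<le> M * (\<delta> + \<epsilon>)"
      and minJ: "\<forall>c s. J_fun B \<gamma> P s_calib p w \<phi> R_s u_\<delta> s_mod \<alpha> (\<nu>1 * \<alpha>) (\<nu>2 * \<alpha>) c_\<alpha> s_\<alpha>
               \<le> J_fun B \<gamma> P s_calib p w \<phi> R_s u_\<delta> s_mod \<alpha> (\<nu>1 * \<alpha>) (\<nu>2 * \<alpha>) c s"
    define \<eta> where "\<eta> = \<delta> + \<epsilon>"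
    define nu where "nu = norm (u_star - u_\<delta>)"
    define ne where "ne = norm (s_star - s_mod)"
    define r where "r = norm (B c_\<alpha> s_\<alpha> - u_\<delta>)"
    define q where "q = norm (s_\<alpha> - s_mod)"
    define G\<alpha> where "G\<alpha> = G s_\<alpha>"
    have \<delta>0: "\<delta> \<ge> 0" using nu by (meson norm_ge_zero order_trans)
    have \<epsilon>0: "\<epsilon> \<ge> 0" using ne by (meson norm_ge_zero order_trans)
    have \<eta>pos: "\<eta> > 0"
    proof -
      have "0 < M * \<eta>" using \<alpha>0 \<alpha>hi unfolding \<eta>_def by linarith
      thus ?thesis using mM by (simp add: zero_less_mult_iff)
    qed
    have nu\<eta>: "nu \<le> \<eta>" "nu \<ge> 0" using nu \<epsilon>0 unfolding nu_def \<eta>_def by auto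
    have ne\<eta>: "ne \<le> \<eta>" "ne \<ge> 0" using ne \<delta>0 unfolding ne_def \<eta>_def by auto
    have J: "J_fun B \<gamma> P s_calib p w \<phi> R_s u_\<delta> s_mod \<alpha> (\<nu>1 * \<alpha>) (\<nu>2 * \<alpha>) c_\<alpha> s_\<alpha>
               \<le> J_fun B \<gamma> P s_calib p w \<phi> R_s u_\<delta> s_mod \<alpha> (\<nu>1 * \<alpha>) (\<nu>2 * \<alpha>) c_star s_star"
      using minJ by blast
    have Ja: "J_fun B \<gamma> P s_calib p w \<phi> R_s u_\<delta> s_mod \<alpha> (\<nu>1 * \<alpha>) (\<nu>2 * \<alpha>) c_\<alpha> s_\<alpha>
       = ereal (1/2 * r^2 + \<gamma>/2 * q^2 + \<nu>2 * \<alpha> / 2 * (norm (P s_\<alpha> - s_calib))^2)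
         + ereal \<alpha> * Ph c_\<alpha> + ereal (\<nu>1 * \<alpha> * R_s s_\<alpha>)"
      unfolding J_fun_def r_def q_def Ph_def by simp
    have Js: "J_fun B \<gamma> P s_calib p w \<phi> R_s u_\<delta> s_mod \<alpha> (\<nu>1 * \<alpha>) (\<nu>2 * \<alpha>) c_star s_star
       = ereal (1/2 * nu^2 + \<gamma>/2 * ne^2 + \<nu>2 * \<alpha> / 2 * (norm (P s_star - s_calib))^2
           + \<alpha> * Ps + \<nu>1 * \<alpha> * R_s s_star)"
      unfolding J_fun_def nu_def ne_def Ph_def[symmetric] Phs u_star_def by simp
    have "Ph c_\<alpha> \<noteq> \<infinity>"
    proof
      assume "Ph c_\<alpha> = \<infinity>"
      hence "J_fun B \<gamma> P s_calib p w \<phi> R_s u_\<delta> s_mod \<alpha> (\<nu>1 * \<alpha>) (\<nu>2 * \<alpha>) c_\<alpha> s_\<alpha> = \<infinity>"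
        unfolding Ja using \<alpha>0 by simp
      thus False using J unfolding Js by simp
    qed
    hence sum_a: "(\<lambda>i. w i * \<bar>c_\<alpha> \<bullet> \<phi> i\<bar> powr p) summable_on UNIV"
      and Pha0: "Ph c_\<alpha> = ereal (\<Sum>\<^sub>\<infinity>i. w i * \<bar>c_\<alpha> \<bullet> \<phi> i\<bar> powr p)"
      using Phi_finite unfolding Ph_def by auto
    define Pa where "Pa = (\<Sum>\<^sub>\<infinity>i. w i * \<bar>c_\<alpha> \<bullet> \<phi> i\<bar> powr p)"
    have Pha: "Ph c_\<alpha> = ereal Pa" using Pha0 Pa_def by simp
    have E1: "1/2 * r^2 + \<gamma>/2 * q^2 + \<alpha> * (Pa + G\<alpha>) \<le> 1/2 * nu^2 + \<gamma>/2 * ne^2 + \<alpha> * (Ps + Gs)"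
      using J unfolding Ja Js Pha G\<alpha>_def Gs_def G_def by (simp add: algebra_simps)
    have Ga0: "G\<alpha> \<ge> 0" using G0 G\<alpha>_def by simp
    have nu2: "nu^2 \<le> \<eta>^2" using nu\<eta> by (intro power_mono) auto
    have ne2: "ne^2 \<le> \<eta>^2" using ne\<eta> by (intro power_mono) auto
    have Pa_le: "Pa \<le> Pb"
    proof -
      have "\<eta>^2 \<le> \<eta>" using \<eta>pos \<eta>1 \<eta>_def by (simp add: power2_eq_square)
      also have "\<eta> \<le> \<alpha> / m" using \<alpha>lo mM \<eta>_def by (simp add: pos_le_divide_eq mult.commute)
      finally have e: "\<eta>^2 \<le> \<alpha> / m" .
      have "1/2 * nu^2 + \<gamma>/2 * ne^2 \<le> (1+\<gamma>)/2 * \<eta>^2"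
        using nu2 ne2 \<gamma>_pos by (simp add: algebra_simps) (smt (verit) mult_left_mono)
      also have "\<dots> \<le> (1+\<gamma>)/2 * (\<alpha> / m)" using e \<gamma>_pos by (intro mult_left_mono) auto
      finally have "1/2 * nu^2 + \<gamma>/2 * ne^2 \<le> \<alpha> * ((1+\<gamma>)/(2*m))" by (simp add: mult.commute)
      moreover have "0 \<le> \<alpha> * G\<alpha>" using \<alpha>0 Ga0 by simp
      moreover have "\<alpha>*(Pa+G\<alpha>) = \<alpha>*Pa + \<alpha>*G\<alpha>" "\<alpha>*(Ps+Gs) = \<alpha>*Ps + \<alpha>*Gs"
        by (simp_all add: distrib_left)
      moreover have "\<alpha>*Pb = \<alpha>*((1+\<gamma>)/(2*m)) + \<alpha>*Ps + \<alpha>*Gs" unfolding Pb_def by (simp add: distrib_left)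
      moreover have "0 \<le> \<gamma>/2*q^2" "0 \<le> 1/2*r^2" using \<gamma>_pos by simp_all
      ultimately have "\<alpha> * Pa \<le> \<alpha> * Pb" using E1 by linarith
      thus ?thesis using \<alpha>0 by simp
    qed
    define a where "a i = c_\<alpha> \<bullet> \<phi> i" for i
    define b where "b i = c_star \<bullet> \<phi> i" for i
    define mid where "mid = (1/2) *\<^sub>R (c_\<alpha> + c_star)"
    have mi: "mid \<bullet> \<phi> i = (a i + b i)/2" for i
      unfolding mid_def a_def b_def by (simp add: inner_add_left)
    have aR: "\<bar>a i\<bar> \<le> R" for i
    proof -
      have "\<bar>a i\<bar> powr p \<le> Pa" using Phi_term_le[OF sum_a w_bounds] unfolding a_def Pa_def by simp
      hence "max 1 (\<bar>a i\<bar> powr p) \<le> max 1 Pb" using Pa_le by simp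
      thus ?thesis using abs_le_powr[of p "a i"] p_bounds unfolding R_def by simp
    qed
    have bR: "\<bar>b i\<bar> \<le> R" for i
    proof -
      have "\<bar>b i\<bar> powr p \<le> Ps" using Phi_term_le[OF sum_s w_bounds] unfolding b_def Ps_def by simp
      hence "max 1 (\<bar>b i\<bar> powr p) \<le> max 1 Ps" by simp
      thus ?thesis using abs_le_powr[of p "b i"] p_bounds unfolding R_def by simp
    qed
    define gp where "gp i = \<bar>a i\<bar> powr p + \<bar>b i\<bar> powr p - 2 * \<bar>(a i + b i)/2\<bar> powr p" for i
    have gapi: "k * (a i - b i)^2 \<le> gp i" for i
      unfolding k_def gp_def by (rule gap_pos[OF p_bounds aR bR])
    have gp0: "0 \<le> gp i" for i using gapi[of i] k0 by (smt (verit) zero_le_power2 mult_nonneg_nonneg)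
    define fa where "fa i = w i * \<bar>a i\<bar> powr p" for i
    define fb where "fb i = w i * \<bar>b i\<bar> powr p" for i
    define fm where "fm i = w i * \<bar>(a i + b i)/2\<bar> powr p" for i
    have sfa: "fa summable_on UNIV" using sum_a unfolding fa_def a_def .
    have sfb: "fb summable_on UNIV" using sum_s unfolding fb_def b_def .
    have sfm: "fm summable_on UNIV"
    proof (rule summable_on_comparison_real)
      show "(\<lambda>i. (1/2) * (fa i + fb i)) summable_on UNIV"
        by (intro summable_on_cmult_right summable_on_add sfa sfb)
      show "0 \<le> fm i" for i unfolding fm_def using w0 by simp
      show "fm i \<le> (1/2) * (fa i + fb i)" for i
      proof -
        have "0 \<le> w i * gp i" using w0 gp0 by simp
        thus ?thesis unfolding fm_def fa_def fb_def gp_def by (simp add: algebra_simps)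
      qed
    qed
    define Pm where "Pm = infsum fm UNIV"
    have Phm: "Ph mid = ereal Pm"
      using sfm unfolding Ph_def Phi_p_def Pm_def fm_def mi by simp
    have E3: "\<xi>c \<bullet> (c_\<alpha> - c_star) \<le> 2 * (Pm - Ps)"
    proof -
      have "ereal (Ps + \<xi>c \<bullet> (mid - c_star)) \<le> ereal Pm" using SG2[of mid] Phm by simp
      hence "Ps + \<xi>c \<bullet> (mid - c_star) \<le> Pm" by simp
      moreover have "\<xi>c \<bullet> (mid - c_star) = (\<xi>c \<bullet> (c_\<alpha> - c_star)) / 2"
        unfolding mid_def by (simp add: inner_diff_right inner_add_right algebra_simps)
      ultimately show ?thesis by simp
    qed
    define Sd where "Sd = (\<Sum>\<^sub>\<infinity>i. ((c_\<alpha> - c_star) \<bullet> \<phi> i)^2)"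
    have dd: "(c_\<alpha> - c_star) \<bullet> \<phi> i = a i - b i" for i unfolding a_def b_def by (simp add: inner_diff_left)
    have sSd: "(\<lambda>i. ((c_\<alpha> - c_star) \<bullet> \<phi> i)^2) summable_on UNIV" by (rule parseval_le(1)[OF \<phi>_onb])
    have nSd: "(norm (c_\<alpha> - c_star))^2 \<le> Sd" unfolding Sd_def by (rule parseval_le(2)[OF \<phi>_onb])
    have Gap: "k * Sd \<le> Pa + Ps - 2 * Pm"
    proof -
      have h1: "((\<lambda>i. k * ((c_\<alpha> - c_star) \<bullet> \<phi> i)^2) has_sum (k * Sd)) UNIV"
        unfolding Sd_def by (intro has_sum_cmult_right has_sum_infsum sSd)
      have h2: "((\<lambda>i. fa i + fb i + (-2) * fm i) has_sum (Pa + Ps + (-2) * Pm)) UNIV"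
      proof (intro has_sum_add has_sum_cmult_right)
        show "(fa has_sum Pa) UNIV" unfolding Pa_def fa_def a_def using sum_a by (rule has_sum_infsum)
        show "(fb has_sum Ps) UNIV" unfolding Ps_def fb_def b_def using sum_s by (rule has_sum_infsum)
        show "(fm has_sum Pm) UNIV" unfolding Pm_def using sfm by (rule has_sum_infsum)
      qed
      have "k * Sd \<le> Pa + Ps + (-2) * Pm"
      proof (rule has_sum_mono[OF h1 h2])
        fix i :: 'i
        have "k * ((c_\<alpha> - c_star) \<bullet> \<phi> i)^2 \<le> gp i" using gapi[of i] dd[of i] by simp
        also have "gp i \<le> w i * gp i" using gp0[of i] w_bounds by (simp add: mult_le_cancel_right1)
        also have "w i * gp i = fa i + fb i + (-2) * fm i" unfolding gp_def fa_def fb_def fm_def by (simp add: algebra_simps)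
        finally show "k * ((c_\<alpha> - c_star) \<bullet> \<phi> i)^2 \<le> fa i + fb i + (-2) * fm i" .
      qed
      thus ?thesis by simp
    qed
    define L where "L = \<xi>c \<bullet> (c_\<alpha> - c_star) + \<xi>s \<bullet> (s_\<alpha> - s_star)"
    define D where "D = Pa + G\<alpha> - Ps - Gs - L"
    define bb where "bb = norm (B c_\<alpha> s_\<alpha> - B c_star s_star)"
    define z where "z = (norm (s_\<alpha> - s_star))^2"
    have E2: "- L \<le> \<kappa>1 * D + \<kappa>2 * bb + \<kappa>3 * z"
    proof -
      have sc: "ereal (\<xi>_star \<bullet> ((c_star, s_star) - (c_\<alpha>, s_\<alpha>)))
        \<le> ereal \<kappa>1 * bregman Rt \<xi>_star (c_\<alpha>, s_\<alpha>) (c_star, s_star)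
           + ereal (\<kappa>2 * norm (B c_\<alpha> s_\<alpha> - B c_star s_star) + \<kappa>3 * (norm (s_\<alpha> - s_star))\<^sup>2)"
        using source_cond unfolding Rt_def by blast
      have br: "bregman Rt \<xi>_star (c_\<alpha>, s_\<alpha>) (c_star, s_star) = ereal D"
        unfolding bregman_def Rt_eq Pha Phs D_def L_def G\<alpha>_def Gs_def xi
        by (simp add: inner_diff_right)
      have "\<xi>_star \<bullet> ((c_star, s_star) - (c_\<alpha>, s_\<alpha>)) = - L"
        unfolding xi L_def by (simp add: inner_diff_right)
      thus ?thesis using sc unfolding br bb_def z_def by simp
    qed
    have SGa: "\<xi>s \<bullet> (s_\<alpha> - s_star) \<le> G\<alpha> - Gs" using SG1[of s_\<alpha>] G\<alpha>_def by simp
    have DGap: "Pa + Ps - 2 * Pm \<le> D" using E3 SGa unfolding D_def L_def by argo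
    have D0: "0 \<le> D"
    proof -
      have "0 \<le> k * Sd" using k0 nSd by (smt (verit) zero_le_power2 mult_nonneg_nonneg)
      thus ?thesis using Gap DGap by linarith
    qed
    have bbr: "bb \<le> r + nu"
    proof -
      have "B c_\<alpha> s_\<alpha> - B c_star s_star = (B c_\<alpha> s_\<alpha> - u_\<delta>) + (u_\<delta> - u_star)"
        using u_star_def by simp
      hence "bb \<le> norm (B c_\<alpha> s_\<alpha> - u_\<delta>) + norm (u_\<delta> - u_star)"
        unfolding bb_def by (metis norm_triangle_ineq)
      thus ?thesis unfolding r_def nu_def by (simp add: norm_minus_commute)
    qed
    have zq: "z \<le> (q + ne)^2"
    proof -
      have "s_\<alpha> - s_star = (s_\<alpha> - s_mod) + (s_mod - s_star)" by simp
      hence "norm (s_\<alpha> - s_star) \<le> norm (s_\<alpha> - s_mod) + norm (s_mod - s_star)"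
        by (metis norm_triangle_ineq)
      hence "norm (s_\<alpha> - s_star) \<le> q + ne" unfolding q_def ne_def by (simp add: norm_minus_commute)
      thus ?thesis unfolding z_def by (intro power_mono) auto
    qed
    have r0: "r \<ge> 0" "q \<ge> 0" "bb \<ge> 0" "z \<ge> 0" unfolding r_def q_def bb_def z_def by auto
    have M1: "\<alpha> * (1 - \<kappa>1) * D \<le> 1/2*nu^2 + \<gamma>/2*ne^2 - 1/2*r^2 - \<gamma>/2*q^2 + \<alpha>*\<kappa>2*bb + \<alpha>*\<kappa>3*z"
    proof -
      have "\<alpha> * (Pa + G\<alpha>) - \<alpha> * (Ps + Gs) = \<alpha> * D + \<alpha> * L" unfolding D_def by (simp add: algebra_simps)
      moreover have "\<alpha> * (- L) \<le> \<alpha> * (\<kappa>1 * D + \<kappa>2 * bb + \<kappa>3 * z)" using E2 \<alpha>0 by (intro mult_left_mono) auto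
      ultimately show ?thesis using E1 by (simp add: algebra_simps)
    qed
    have M2: "\<alpha>*\<kappa>2*bb - 1/2*r^2 \<le> \<alpha>*\<kappa>2*nu + (\<alpha>*\<kappa>2)^2/2"
    proof -
      have "\<alpha>*\<kappa>2*bb \<le> \<alpha>*\<kappa>2*(r + nu)" using bbr \<alpha>0 \<kappa>_bounds by (intro mult_left_mono) auto
      moreover have "0 \<le> (r - \<alpha>*\<kappa>2)^2" by simp
      ultimately show ?thesis by (simp add: power2_eq_square algebra_simps)
    qed
    have M3: "\<alpha>*\<kappa>3*z - \<gamma>/2*q^2 \<le> (c3 + c3^2/A) * ne^2"
    proof -
      have "\<alpha>*\<kappa>3 \<le> c3" unfolding c3_def using \<alpha>max \<kappa>_bounds by (simp add: mult_right_mono)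
      hence "\<alpha>*\<kappa>3*z \<le> c3 * (q + ne)^2" using zq r0 c30 \<alpha>0 \<kappa>_bounds
        by (meson mult_mono mult_nonneg_nonneg order_less_imp_le)
      moreover have "c3 * (q + ne)^2 \<le> (A + c3) * q^2 + (c3 + c3^2/A) * ne^2"
      proof -
        have "0 \<le> (A*q - c3*ne)^2 / A" using A0 by simp
        also have "(A*q - c3*ne)^2 / A = A*q^2 - 2*c3*q*ne + c3^2/A*ne^2"
          using A0 by (simp add: power2_eq_square field_simps)
        finally show ?thesis by (simp add: power2_eq_square algebra_simps)
      qed
      moreover have "A + c3 = \<gamma>/2" unfolding A_def by simp
      ultimately show ?thesis by simp
    qed
    have M4: "\<alpha> * (1 - \<kappa>1) * D \<le> K0 * \<eta>^2"
    proof -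
      have "\<alpha>*\<kappa>2*nu \<le> M*\<kappa>2*\<eta>^2"
      proof -
        have "\<alpha>*nu \<le> (M*\<eta>)*\<eta>" using \<alpha>hi nu\<eta> \<alpha>0 unfolding \<eta>_def by (intro mult_mono) auto
        hence "\<kappa>2*(\<alpha>*nu) \<le> \<kappa>2*((M*\<eta>)*\<eta>)" using \<kappa>_bounds by (intro mult_left_mono) auto
        thus ?thesis by (simp add: power2_eq_square algebra_simps)
      qed
      moreover have "(\<alpha>*\<kappa>2)^2/2 \<le> M^2*\<kappa>2^2/2*\<eta>^2"
      proof -
        have "\<alpha>^2 \<le> (M*\<eta>)^2" using \<alpha>hi \<alpha>0 unfolding \<eta>_def by (intro power_mono) auto
        hence "\<alpha>^2 * \<kappa>2^2 \<le> (M*\<eta>)^2 * \<kappa>2^2" by (intro mult_right_mono) auto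
        thus ?thesis by (simp add: power_mult_distrib algebra_simps)
      qed
      moreover have "(c3 + c3^2/A) * ne^2 \<le> (c3 + c3^2/A) * \<eta>^2" using ne2 A0 c30 by (intro mult_left_mono) auto
      moreover have "K0 * \<eta>^2 = 1/2*\<eta>^2 + \<gamma>/2*\<eta>^2 + M*\<kappa>2*\<eta>^2 + M^2*\<kappa>2^2/2*\<eta>^2 + (c3 + c3^2/A) * \<eta>^2"
        unfolding K0_def by (simp add: algebra_simps)
      moreover have "\<gamma>/2*ne^2 \<le> \<gamma>/2*\<eta>^2" using ne2 \<gamma>_pos by simp
      ultimately show ?thesis using M1 M2 M3 nu2 by linarith
    qed
    have M5: "m * \<eta> * (1 - \<kappa>1) * (k * (norm (c_\<alpha> - c_star))^2) \<le> K0 * \<eta>^2"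
    proof -
      have "k * (norm (c_\<alpha> - c_star))^2 \<le> D" using Gap DGap nSd k0 by (smt (verit) mult_left_mono)
      hence "m * \<eta> * (1 - \<kappa>1) * (k * (norm (c_\<alpha> - c_star))^2) \<le> m * \<eta> * (1 - \<kappa>1) * D"
        using mM \<eta>pos \<kappa>_bounds by (intro mult_left_mono) auto
      also have "\<dots> \<le> \<alpha> * (1 - \<kappa>1) * D"
        using \<alpha>lo D0 \<kappa>_bounds unfolding \<eta>_def by (intro mult_right_mono) auto
      finally show ?thesis using M4 by linarith
    qed
    have M6: "(norm (c_\<alpha> - c_star))^2 \<le> K1 / k * \<eta>"
    proof -
      have pos: "m * (1 - \<kappa>1) * k > 0" using mM \<kappa>_bounds k0 by simp
      have "\<eta> * (m * (1 - \<kappa>1) * k * (norm (c_\<alpha> - c_star))^2) \<le> \<eta> * (K0 * \<eta>)"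
        using M5 by (simp add: power2_eq_square algebra_simps)
      hence "m * (1 - \<kappa>1) * k * (norm (c_\<alpha> - c_star))^2 \<le> K0 * \<eta>"
        using \<eta>pos by simp
      hence "(norm (c_\<alpha> - c_star))^2 \<le> K0 * \<eta> / (m * (1 - \<kappa>1) * k)"
        using pos by (simp add: pos_le_divide_eq mult.commute)
      thus ?thesis unfolding K1_def by (simp add: field_simps)
    qed
    have "norm (c_\<alpha> - c_star) = sqrt ((norm (c_\<alpha> - c_star))^2)" by simp
    also have "\<dots> \<le> sqrt (K1 / k * \<eta>)" using M6 by (rule real_sqrt_le_mono)
    also have "\<dots> = sqrt (K1 / k) * sqrt \<eta>" by (rule real_sqrt_mult)
    also have "\<dots> = sqrt (K1 / k) * sqrt (\<delta> + \<epsilon>)" unfolding \<eta>_def ..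
    finally show "norm (c_\<alpha> - c_star) \<le> sqrt (K1 / k) * sqrt (\<delta> + \<epsilon>)" .
  qed
qed


end
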